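(* Let $X$ be a Banach space with a closed subspace $Z$ such that $Z$ and $X/Z$ are SCD spaces. Then $X$ is an SCD space.
   Context: A slice of a convex bounded set $A$ in a Banach space is $S(A,x^*,\varepsilon)=\{x\in A:\ \mathrm{Re}\,x^*(x)>\sup\mathrm{Re}\,x^*(A)-\varepsilon\}$ with $x^*$ in the dual and $\varepsilon>0$. A convex bounded $A$ is an SCD set if there is a sequence $(S_n)$ of slices of $A$ such that $A\subseteq\overline{\mathrm{conv}}(B)$ for every $B\subseteq A$ intersecting every $S_n$. A separable Banach space is an SCD space if every convex bounded subset of it is an SCD set. *)

theory Defs
  imports "HOL-Analysis.Analysis"
begin

definition dual_functional_on :: "'a::real_normed_vector set \<Rightarrow> ('a \<Rightarrow> real) \<Rightarrow> bool" where
  "dual_functional_on S f \<longleftrightarrow>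
     (\<forall>x\<in>S. \<forall>y\<in>S. f (x + y) = f x + f y) \<and>
     (\<forall>x\<in>S. \<forall>c::real. f (c *\<^sub>R x) = c * f x) \<and>
     (\<exists>K. \<forall>x\<in>S. \<bar>f x\<bar> \<le> K * norm x)"

definition slice :: "'a set \<Rightarrow> ('a \<Rightarrow> real) \<Rightarrow> real \<Rightarrow> 'a set" where
  "slice A f \<epsilon> = {x \<in> A. f x > Sup (f ` A) - \<epsilon>}"

definition SCD_set_in :: "'a::real_normed_vector set \<Rightarrow> 'a set \<Rightarrow> bool" where
  "SCD_set_in S A \<longleftrightarrow>
     (\<exists>f :: nat \<Rightarrow> 'a \<Rightarrow> real. \<exists>\<epsilon> :: nat \<Rightarrow> real.
        (\<forall>n. dual_functional_on S (f n) \<and> \<epsilon> n > 0) \<and>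
        (\<forall>B. B \<subseteq> A \<longrightarrow> (\<forall>n. B \<inter> slice A (f n) (\<epsilon> n) \<noteq> {}) \<longrightarrow>
              A \<subseteq> closure (convex hull B)))"

definition SCD_space_on :: "'a::real_normed_vector set \<Rightarrow> bool" where
  "SCD_space_on S \<longleftrightarrow>
     separable_space (top_of_set S) \<and>
     (\<forall>A. A \<subseteq> S \<longrightarrow> convex A \<longrightarrow> bounded A \<longrightarrow> SCD_set_in S A)"

abbreviation SCD_space :: "'a::real_normed_vector itself \<Rightarrow> bool" where
  "SCD_space _ \<equiv> SCD_space_on (UNIV :: 'a set)"

end

theory Submission
  imports Defs
begin


lemma choice_2_2:
  assumes "\<forall>x y. \<exists>a b. P x y a b"
  shows "\<exists>fa fb. \<forall>x y. P x y (fa x y) (fb x y)"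
proof -
  have "\<forall>xy. \<exists>ab. P (fst xy) (snd xy) (fst ab) (snd ab)" using assms by auto
  then obtain F where F: "\<forall>xy. P (fst xy) (snd xy) (fst (F xy)) (snd (F xy))" by (rule choice[THEN exE])
  show ?thesis
  proof (intro exI allI)
    fix x y show "P x y (fst (F (x,y))) (snd (F (x,y)))" using F[rule_format, of "(x,y)"] by simp
  qed
qed

lemma choice_3_1:
  assumes "\<forall>x y z. \<exists>a. P x y z a"
  shows "\<exists>fa. \<forall>x y z. P x y z (fa x y z)"
proof -
  have "\<forall>xyz. \<exists>a. P (fst xyz) (fst (snd xyz)) (snd (snd xyz)) a" using assms by auto
  then obtain F where F: "\<forall>xyz. P (fst xyz) (fst (snd xyz)) (snd (snd xyz)) (F xyz)" by (rule choice[THEN exE])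
  show ?thesis
  proof (intro exI allI)
    fix x y z show "P x y z (F (x,y,z))" using F[rule_format, of "(x,y,z)"] by simp
  qed
qed

lemma choice_4_2:
  assumes "\<forall>x y z w. \<exists>a b. P x y z w a b"
  shows "\<exists>fa fb. \<forall>x y z w. P x y z w (fa x y z w) (fb x y z w)"
proof -
  have "\<forall>t. \<exists>ab. P (fst t) (fst (snd t)) (fst (snd (snd t))) (snd (snd (snd t))) (fst ab) (snd ab)" using assms by auto
  then obtain F where F: "\<forall>t. P (fst t) (fst (snd t)) (fst (snd (snd t))) (snd (snd (snd t))) (fst (F t)) (snd (F t))"
    by (rule choice[THEN exE])
  show ?thesis
  proof (intro exI allI)
    fix x y z w show "P x y z w (fst (F (x,y,z,w))) (snd (F (x,y,z,w)))" using F[rule_format, of "(x,y,z,w)"] by simp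
  qed
qed

lemma choice_5_1:
  assumes "\<forall>x y z w v. \<exists>a. P x y z w v a"
  shows "\<exists>fa. \<forall>x y z w v. P x y z w v (fa x y z w v)"
proof -
  have "\<forall>t. \<exists>a. P (fst t) (fst (snd t)) (fst (snd (snd t))) (fst (snd (snd (snd t)))) (snd (snd (snd (snd t)))) a" using assms by auto
  then obtain F where F: "\<forall>t. P (fst t) (fst (snd t)) (fst (snd (snd t))) (fst (snd (snd (snd t)))) (snd (snd (snd (snd t)))) (F t)"
    by (rule choice[THEN exE])
  show ?thesis
  proof (intro exI allI)
    fix x y z w v show "P x y z w v (F (x,y,z,w,v))" using F[rule_format, of "(x,y,z,w,v)"] by simp
  qed
qed



lemma dual_UNIV_iff: "dual_functional_on UNIV f \<longleftrightarrow> bounded_linear f"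
proof
  assume "dual_functional_on UNIV f"
  then obtain K where a: "\<And>x y. f (x+y) = f x + f y" and s: "\<And>c x. f (c *\<^sub>R x) = c * f x"
     and K: "\<And>x. \<bar>f x\<bar> \<le> K * norm x" unfolding dual_functional_on_def by auto
  show "bounded_linear f"
    by (rule bounded_linear_intro[of f K]) (use a s K in \<open>auto simp: abs_le_iff mult.commute\<close>)
next
  assume "bounded_linear f"
  then interpret bounded_linear f .
  obtain K where "\<And>x. norm (f x) \<le> norm x * K" using bounded by blast
  then show "dual_functional_on UNIV f" unfolding dual_functional_on_def
    by (auto simp: add scaleR mult.commute intro!: exI[of _ K])
qed

definition hbgood :: "real \<Rightarrow> 'a::real_normed_vector set \<Rightarrow> ('a \<Rightarrow> real) \<Rightarrow> ('a \<times> real) set \<Rightarrow> bool" where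
  "hbgood K Z h G \<longleftrightarrow> subspace G \<and> (\<forall>x r. (x,r) \<in> G \<longrightarrow> r \<le> K * norm x) \<and> (\<forall>z\<in>Z. (z, h z) \<in> G)"

lemma hbgood_unique:
  assumes "hbgood K Z h G" "(x,r) \<in> G" "(x,s) \<in> G" shows "r = s"
proof -
  have sub: "subspace G" and dom: "\<And>x r. (x,r) \<in> G \<Longrightarrow> r \<le> K * norm x" using assms(1) unfolding hbgood_def by auto
  have "(x,r) - (x,s) \<in> G" using subspace_diff[OF sub assms(2,3)] .
  hence "(0, r - s) \<in> G" by simp
  moreover have "(-1) *\<^sub>R (0, r - s) \<in> G" using sub calculation subspace_scale by blast
  hence "(0, s - r) \<in> G" by simp
  ultimately show ?thesis using dom[of 0 "r-s"] dom[of 0 "s-r"] by simp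
qed

lemma hb_extend_step:
  assumes g: "hbgood K Z h G" and x0: "\<forall>r. (x0, r) \<notin> G" and K: "K \<ge> 0"
  shows "\<exists>G'. hbgood K Z h G' \<and> G \<subseteq> G' \<and> G' \<noteq> G"
proof -
  have sub: "subspace G" and dom: "\<And>x r. (x,r) \<in> G \<Longrightarrow> r \<le> K * norm x"
    and zz: "\<forall>z\<in>Z. (z, h z) \<in> G" using g unfolding hbgood_def by auto
  have key: "r1 - K * norm (m1 - x0) \<le> K * norm (m2 + x0) - r2" if "(m1,r1) \<in> G" "(m2,r2) \<in> G" for m1 r1 m2 r2
  proof -
    have "(m1,r1) + (m2,r2) \<in> G" using sub that subspace_add by blast
    hence "r1 + r2 \<le> K * norm (m1 + m2)" using dom by simp
    also have "norm (m1 + m2) \<le> norm (m1 - x0) + norm (m2 + x0)"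
      using norm_triangle_ineq[of "m1 - x0" "m2 + x0"] by simp
    finally show ?thesis using K by (smt (verit) mult_left_mono distrib_left)
  qed
  have G0: "(0,0) \<in> G" using sub subspace_0 by (metis zero_prod_def)
  define S where "S = (\<lambda>(m,r). r - K * norm (m - x0)) ` G"
  have bdd: "bdd_above S" unfolding S_def bdd_above_def using key[OF _ G0] by fastforce
  have ne: "S \<noteq> {}" using G0 S_def by auto
  define c where "c = Sup S"
  have c1: "r1 - K * norm (m1 - x0) \<le> c" if "(m1,r1) \<in> G" for m1 r1
    unfolding c_def using cSup_upper[OF _ bdd] that S_def by force
  have c2: "c \<le> K * norm (m2 + x0) - r2" if "(m2,r2) \<in> G" for m2 r2
    unfolding c_def using cSup_least[OF ne] key[OF _ that] S_def by force
  define G' where "G' = {(m + t *\<^sub>R x0, r + t * c) | m r t. (m,r) \<in> G}"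
  have "subspace G'"
    unfolding subspace_def G'_def
  proof (intro conjI allI impI ballI)
    show "0 \<in> {(m + t *\<^sub>R x0, r + t * c) |m r t. (m, r) \<in> G}"
      using G0 by (auto intro!: exI[of _ 0] simp: zero_prod_def)
  next
    fix u v assume "u \<in> {(m + t *\<^sub>R x0, r + t * c) |m r t. (m, r) \<in> G}" "v \<in> {(m + t *\<^sub>R x0, r + t * c) |m r t. (m, r) \<in> G}"
    then obtain m1 r1 t1 m2 r2 t2 where u: "u = (m1 + t1 *\<^sub>R x0, r1 + t1 * c)" "(m1,r1) \<in> G"
      and v: "v = (m2 + t2 *\<^sub>R x0, r2 + t2 * c)" "(m2,r2) \<in> G" by blast
    have "(m1,r1) + (m2,r2) \<in> G" using sub u v subspace_add by blast
    hence "(m1+m2, r1+r2) \<in> G" by simp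
    moreover have "u + v = ((m1+m2) + (t1+t2) *\<^sub>R x0, (r1+r2) + (t1+t2)*c)"
      using u v by (simp add: algebra_simps scaleR_add_left)
    ultimately show "u + v \<in> {(m + t *\<^sub>R x0, r + t * c) |m r t. (m, r) \<in> G}"
      by blast
  next
    fix a u assume "u \<in> {(m + t *\<^sub>R x0, r + t * c) |m r t. (m, r) \<in> G}"
    then obtain m1 r1 t1 where u: "u = (m1 + t1 *\<^sub>R x0, r1 + t1 * c)" "(m1,r1) \<in> G" by blast
    have "a *\<^sub>R (m1,r1) \<in> G" using sub u subspace_scale by blast
    hence "(a *\<^sub>R m1, a*r1) \<in> G" by simp
    moreover have "a *\<^sub>R u = (a *\<^sub>R m1 + (a*t1) *\<^sub>R x0, a*r1 + (a*t1)*c)"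
      using u by (simp add: algebra_simps scaleR_add_right)
    ultimately show "a *\<^sub>R u \<in> {(m + t *\<^sub>R x0, r + t * c) |m r t. (m, r) \<in> G}"
      by auto
  qed
  moreover have "r \<le> K * norm x" if "(x,r) \<in> G'" for x r
  proof -
    obtain m s t where xr: "x = m + t *\<^sub>R x0" "r = s + t * c" "(m,s) \<in> G" using \<open>(x,r) \<in> G'\<close> G'_def by blast
    consider "t = 0" | "t > 0" | "t < 0" by linarith
    then show ?thesis
    proof cases
      case 1 then show ?thesis using xr dom by simp
    next
      case 2
      have "(1/t) *\<^sub>R (m,s) \<in> G" using sub xr subspace_scale by blast
      hence "c \<le> K * norm ((1/t) *\<^sub>R m + x0) - s / t" using c2 by simp
      hence "t * c \<le> t * (K * norm ((1/t) *\<^sub>R m + x0) - s / t)" using 2 by simp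
      also have "\<dots> = K * (t * norm ((1/t) *\<^sub>R m + x0)) - s" using 2 by (simp add: algebra_simps)
      also have "t * norm ((1/t) *\<^sub>R m + x0) = norm (t *\<^sub>R ((1/t) *\<^sub>R m + x0))" using 2 by simp
      also have "t *\<^sub>R ((1/t) *\<^sub>R m + x0) = x" using 2 xr by (simp add: scaleR_add_right)
      finally show ?thesis using xr by simp
    next
      case 3
      define u where "u = -t"
      have u: "u > 0" using 3 u_def by simp
      have "(1/u) *\<^sub>R (m,s) \<in> G" using sub xr subspace_scale by blast
      hence "s / u - K * norm ((1/u) *\<^sub>R m - x0) \<le> c" using c1 by simp
      hence "u * (s / u - K * norm ((1/u) *\<^sub>R m - x0)) \<le> u * c" using u by (simp add: mult_left_mono)
      hence "s - K * (u * norm ((1/u) *\<^sub>R m - x0)) \<le> u * c" using u by (simp add: algebra_simps)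
      also have "u * norm ((1/u) *\<^sub>R m - x0) = norm (u *\<^sub>R ((1/u) *\<^sub>R m - x0))" using u by simp
      also have "u *\<^sub>R ((1/u) *\<^sub>R m - x0) = x" using u xr u_def by (simp add: scaleR_diff_right)
      finally show ?thesis using xr u_def by simp
    qed
  qed
  moreover have "G \<subseteq> G'" unfolding G'_def by (force intro: exI[of _ 0])
  moreover have "(x0, c) \<in> G'"
  proof -
    have "(x0, c) = (0 + 1 *\<^sub>R x0, 0 + 1 * c)" by simp
    then show ?thesis unfolding G'_def using G0 by blast
  qed
  ultimately show ?thesis using zz x0 unfolding hbgood_def by blast
qed

lemma hahn_banach_ext:
  fixes Z :: "'a::real_normed_vector set"
  assumes "subspace Z" "dual_functional_on Z h"
  shows "\<exists>g. bounded_linear g \<and> (\<forall>z\<in>Z. g z = h z)"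
proof -
  obtain K0 where add: "\<And>x y. x\<in>Z \<Longrightarrow> y\<in>Z \<Longrightarrow> h (x + y) = h x + h y"
    and sc: "\<And>x c. x\<in>Z \<Longrightarrow> h (c *\<^sub>R x) = c * h x" and K0: "\<And>x. x\<in>Z \<Longrightarrow> \<bar>h x\<bar> \<le> K0 * norm x"
    using assms(2) unfolding dual_functional_on_def by blast
  define K where "K = max K0 0"
  have K: "K \<ge> 0" "\<And>x. x\<in>Z \<Longrightarrow> \<bar>h x\<bar> \<le> K * norm x"
    unfolding K_def using K0 by (auto intro: order_trans[OF K0 mult_right_mono])
  have h0: "h 0 = 0" using sc[of 0 0] assms(1) subspace_0 by force
  define \<A> where "\<A> = {G. hbgood K Z h G}"
  define G0 where "G0 = (\<lambda>z. (z, h z)) ` Z"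
  have G0: "hbgood K Z h G0"
    unfolding hbgood_def G0_def subspace_def
    using assms(1) K(2) add sc h0
    by (auto simp: subspace_0 subspace_add subspace_scale abs_le_iff image_iff zero_prod_def
          intro!: bexI[of _ 0] subspace_add subspace_scale)
  have "\<exists>M\<in>\<A>. \<forall>X\<in>\<A>. M \<subseteq> X \<longrightarrow> X = M"
  proof (rule Zorn_Lemma2, intro ballI)
    fix C assume C: "C \<in> chains \<A>"
    show "\<exists>U\<in>\<A>. \<forall>X\<in>C. X \<subseteq> U"
    proof (cases "C = {}")
      case True then show ?thesis using G0 \<A>_def by auto
    next
      case False
      have CA: "C \<subseteq> \<A>" and ch: "\<And>A B. A\<in>C \<Longrightarrow> B\<in>C \<Longrightarrow> A \<subseteq> B \<or> B \<subseteq> A"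
        using C unfolding chains_def chain_subset_def by auto
      have gd: "\<And>G. G \<in> C \<Longrightarrow> hbgood K Z h G" using CA \<A>_def by auto
      have "hbgood K Z h (\<Union>C)"
        unfolding hbgood_def subspace_def
      proof (intro conjI allI impI ballI)
        obtain G where "G \<in> C" using False by blast
        then show "0 \<in> \<Union>C" using gd[of G] unfolding hbgood_def by (auto dest: subspace_0)
        show "(z, h z) \<in> \<Union>C" if "z \<in> Z" for z using gd[of G] \<open>G\<in>C\<close> that unfolding hbgood_def by auto
      next
        fix x y assume "x \<in> \<Union>C" "y \<in> \<Union>C"
        then obtain A B where "x \<in> A" "y \<in> B" "A \<in> C" "B \<in> C" by blast
        then show "x + y \<in> \<Union>C" using ch[of A B] gd[of A] gd[of B] unfolding hbgood_def
          by (meson UnionI subsetD subspace_add)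
      next
        fix c x assume "x \<in> \<Union>C"
        then obtain A where "x \<in> A" "A \<in> C" by blast
        then show "c *\<^sub>R x \<in> \<Union>C" using gd[of A] unfolding hbgood_def by (meson UnionI subspace_scale)
      next
        fix x r assume "(x,r) \<in> \<Union>C"
        then show "r \<le> K * norm x" using gd unfolding hbgood_def by blast
      qed
      then show ?thesis using \<A>_def by blast
    qed
  qed
  then obtain M where M: "hbgood K Z h M" and max: "\<And>X. hbgood K Z h X \<Longrightarrow> M \<subseteq> X \<Longrightarrow> X = M"
    using \<A>_def by auto
  have tot: "\<exists>r. (x,r) \<in> M" for x
  proof (rule ccontr)
    assume "\<nexists>r. (x, r) \<in> M"
    then obtain G' where "hbgood K Z h G'" "M \<subseteq> G'" "G' \<noteq> M" using hb_extend_step[OF M _ K(1)] by blast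
    then show False using max by blast
  qed
  define g where "g x = (SOME r. (x,r) \<in> M)" for x
  have gM: "(x, g x) \<in> M" for x unfolding g_def using tot someI_ex by metis
  have sub: "subspace M" and dom: "\<And>x r. (x,r) \<in> M \<Longrightarrow> r \<le> K * norm x"
    and zz: "\<forall>z\<in>Z. (z, h z) \<in> M" using M unfolding hbgood_def by auto
  have gadd: "g (x + y) = g x + g y" for x y
  proof -
    have "(x, g x) + (y, g y) \<in> M" using gM sub subspace_add by blast
    then show ?thesis using hbgood_unique[OF M gM[of "x+y"]] by simp
  qed
  have gsc: "g (c *\<^sub>R x) = c * g x" for c x
  proof -
    have "c *\<^sub>R (x, g x) \<in> M" using gM sub subspace_scale by blast
    then show ?thesis using hbgood_unique[OF M gM[of "c *\<^sub>R x"]] by simp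
  qed
  have gb: "\<bar>g x\<bar> \<le> K * norm x" for x
  proof -
    have "g x \<le> K * norm x" using dom gM by blast
    moreover have "g (-x) \<le> K * norm (-x)" using dom gM by blast
    moreover have "g (-x) = - g x" using gsc[of "-1" x] by simp
    ultimately show ?thesis by simp
  qed
  have "bounded_linear g"
    by (rule bounded_linear_intro[of g K]) (use gadd gsc gb in \<open>auto simp: abs_le_iff mult.commute\<close>)
  moreover have "\<forall>z\<in>Z. g z = h z" using hbgood_unique[OF M gM] zz by blast
  ultimately show ?thesis by blast
qed



lemma bdd_inner: "bounded (P::'e::real_inner set) \<Longrightarrow> bdd_above ((\<lambda>y. inner w y) ` P)"
  by (rule bounded_imp_bdd_above[OF bounded_linear_image[OF _ bounded_linear_inner_right]])

lemma sup_closure_ge: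
  fixes P :: "'e::real_inner set"
  assumes "bounded P" "e \<in> closure P"
  shows "inner w e \<le> Sup ((\<lambda>y. inner w y) ` P)"
proof (rule ccontr)
  assume nt: "\<not> inner w e \<le> Sup ((\<lambda>y. inner w y) ` P)"
  define \<gamma> where "\<gamma> = inner w e - Sup ((\<lambda>y. inner w y) ` P)"
  have g: "\<gamma> > 0" using nt \<gamma>_def by simp
  obtain y where y: "y \<in> P" "dist y e < \<gamma> / (norm w + 1)"
  proof -
    have "\<gamma> / (norm w + 1) > 0" using g by (simp add: add_nonneg_pos)
    then show ?thesis using assms(2) closure_approachable[of e P] that by blast
  qed
  have "\<bar>inner w y - inner w e\<bar> \<le> norm w * norm (y - e)"
    using Cauchy_Schwarz_ineq2[of w "y - e"] by (simp add: inner_diff_right)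
  also have "\<dots> \<le> (norm w + 1) * dist y e" by (simp add: dist_norm mult_right_mono)
  also have "\<dots> < \<gamma>" using y(2) by (simp add: field_simps add_pos_nonneg)
  finally have "inner w y > Sup ((\<lambda>y. inner w y) ` P)" using \<gamma>_def by linarith
  moreover have "inner w y \<le> Sup ((\<lambda>y. inner w y) ` P)"
    using cSup_upper[OF _ bdd_inner[OF assms(1)]] y(1) by blast
  ultimately show False by simp
qed

lemma norm_diff_sq: "(norm (x - y))^2 = (norm x)^2 - 2 * inner x y + (norm (y::'e::real_inner))^2"
  by (simp add: power2_norm_eq_inner inner_diff_left inner_diff_right inner_commute)

definition good_pt :: "'e::real_inner set \<Rightarrow> 'e \<Rightarrow> bool" where
  "good_pt P e \<longleftrightarrow> (\<forall>\<eta>>0. \<exists>w \<delta>. \<delta> > 0 \<and> (\<forall>x\<in>P. inner w x > Sup ((\<lambda>y. inner w y) ` P) - \<delta> \<longrightarrow> dist x e < \<eta>))"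

lemma farthest_good:
  fixes P :: "'e::euclidean_space set"
  assumes "bounded P" "P \<noteq> {}"
  shows "\<exists>e\<in>closure P. good_pt P e \<and> (\<forall>x\<in>closure P. dist x c \<le> dist e c)"
proof -
  have K: "compact (closure P)" using assms(1) by (simp add: compact_closure)
  obtain e where e: "e \<in> closure P" "\<And>x. x \<in> closure P \<Longrightarrow> dist x c \<le> dist e c"
  proof -
    have "closure P \<noteq> {}" using assms(2) by simp
    from continuous_attains_sup[OF K this continuous_on_dist[OF continuous_on_id continuous_on_const, of _ c]]
    show ?thesis using that by blast
  qed
  define w where "w = e - c"
  have "good_pt P e" unfolding good_pt_def
  proof (intro allI impI)
    fix \<eta> :: real assume \<eta>: "\<eta> > 0"
    define \<delta> where "\<delta> = \<eta>^2 / 2"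
    have "\<eta>^2 > 0" using \<eta> by simp
    then have \<delta>: "\<delta> > 0" unfolding \<delta>_def by (rule divide_pos_pos) simp
    have "\<forall>x\<in>P. inner w x > Sup ((\<lambda>y. inner w y) ` P) - \<delta> \<longrightarrow> dist x e < \<eta>"
    proof (intro ballI impI)
      fix x assume x: "x \<in> P" "inner w x > Sup ((\<lambda>y. inner w y) ` P) - \<delta>"
      have "inner w e \<le> Sup ((\<lambda>y. inner w y) ` P)" using sup_closure_ge[OF assms(1) e(1)] .
      hence i1: "inner w x > inner w e - \<delta>" using x by linarith
      have "dist x c \<le> dist e c" using e(2) x(1) closure_subset by blast
      hence "(dist x c)^2 \<le> (dist e c)^2" by (rule power_mono) simp
      hence i2: "inner (x - c) (x - c) \<le> inner w w"
        by (simp add: dist_norm power2_norm_eq_inner w_def)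
      have "(dist x e)^2 = inner ((x - c) - w) ((x - c) - w)"
        by (simp add: dist_norm power2_norm_eq_inner w_def)
      also have "\<dots> = inner (x - c) (x - c) - 2 * inner w (x - c) + inner w w"
        by (simp add: inner_diff_left inner_diff_right inner_commute)
      also have "inner w (x - c) = inner w x - inner w e + inner w w"
        by (simp add: inner_diff_right w_def)
      finally have "(dist x e)^2 = inner (x - c) (x - c) - 2 * inner w x + 2 * inner w e - inner w w"
        by (simp add: algebra_simps)
      hence "(dist x e)^2 < 2 * \<delta>" using i1 i2 by (smt (verit))
      hence "(dist x e)^2 < \<eta>^2" using \<delta>_def by simp
      then show "dist x e < \<eta>" by (rule power2_less_imp_less) (use \<eta> in simp)
    qed
    then show "\<exists>w \<delta>. \<delta> > 0 \<and> (\<forall>x\<in>P. inner w x > Sup ((\<lambda>y. inner w y) ` P) - \<delta> \<longrightarrow> dist x e < \<eta>)"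
      using \<delta> by blast
  qed
  then show ?thesis using e(1) e(2) by (intro bexI[of _ e] conjI ballI) auto
qed

lemma good_hull:
  fixes P :: "'e::euclidean_space set"
  assumes "bounded P" "p \<in> P"
  shows "p \<in> closure (convex hull {e. good_pt P e})"
proof (rule ccontr)
  assume np: "p \<notin> closure (convex hull {e. good_pt P e})"
  obtain a b where ab: "inner a p < b" "\<And>x. x \<in> closure (convex hull {e. good_pt P e}) \<Longrightarrow> b < inner a x"
    using separating_hyperplane_closed_point[OF convex_closure[OF convex_convex_hull] closed_closure np] by blast
  obtain D where D: "\<And>x. x \<in> closure P \<Longrightarrow> norm (x - p) \<le> D"
  proof -
    have "bounded ((\<lambda>x. x - p) ` closure P)"
      using assms(1) bounded_closure bounded_translation_minus by blast
    then obtain D where "\<And>y. y \<in> (\<lambda>x. x - p) ` closure P \<Longrightarrow> norm y \<le> D" unfolding bounded_iff by blast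
    then show ?thesis using that by blast
  qed
  define gap where "gap = b - inner a p"
  have gap: "gap > 0" using ab(1) gap_def by simp
  define t where "t = D^2 / (2 * gap) + 1"
  have t: "t > 0" using gap t_def by (simp add: add_nonneg_pos)
  define c where "c = p + t *\<^sub>R a"
  have Pne: "P \<noteq> {}" using assms(2) by auto
  obtain e where e: "e \<in> closure P" "good_pt P e" "\<And>x. x \<in> closure P \<Longrightarrow> dist x c \<le> dist e c"
    using farthest_good[OF assms(1) Pne, of c] by blast
  have "e \<in> convex hull {e. good_pt P e}" using e(2) by (intro hull_inc) simp
  hence "e \<in> closure (convex hull {e. good_pt P e})" using closure_subset by blast
  hence ae: "inner a e > b" using ab(2) by blast
  have pK: "p \<in> closure P" using assms(2) closure_subset by blast
  have "(dist p c)^2 \<le> (dist e c)^2" using e(3)[OF pK] by (rule power_mono) simp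
  moreover have "dist p c = norm (t *\<^sub>R a)" unfolding c_def dist_norm by (simp add: norm_minus_commute)
  moreover have "dist e c = norm ((e - p) - t *\<^sub>R a)" unfolding c_def dist_norm by (simp add: algebra_simps)
  ultimately have "(norm (t *\<^sub>R a))^2 \<le> (norm (e - p))^2 - 2 * inner (e - p) (t *\<^sub>R a) + (norm (t *\<^sub>R a))^2"
    using norm_diff_sq[of "e - p" "t *\<^sub>R a"] by simp
  moreover have "inner (e - p) (t *\<^sub>R a) = t * inner a (e - p)" by (simp add: inner_commute)
  moreover have "(norm (e - p))^2 = inner (e - p) (e - p)" by (simp add: power2_norm_eq_inner)
  ultimately have "2 * t * inner a (e - p) \<le> inner (e - p) (e - p)" by linarith
  moreover have "inner (e - p) (e - p) \<le> D^2"
  proof -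
    have "(norm (e - p))^2 \<le> D^2" using D[OF e(1)] by (rule power_mono) simp
    then show ?thesis by (simp add: power2_norm_eq_inner)
  qed
  moreover have "inner a (e - p) > gap" using ae gap_def by (simp add: inner_diff_right)
  moreover have "2 * t * gap = D^2 + 2 * gap" using gap t_def by (simp add: field_simps)
  moreover have "2 * t * gap < 2 * t * inner a (e - p)"
    using t \<open>inner a (e - p) > gap\<close> by simp
  ultimately show False using gap by linarith
qed

lemma bourgain_fd:
  fixes P :: "'e::euclidean_space set"
  assumes "bounded P" "p \<in> P" "\<rho> > 0"
  shows "\<exists>s u. finite s \<and> (\<forall>e\<in>s. 0 \<le> u e) \<and> sum u s = 1 \<and> dist (\<Sum>e\<in>s. u e *\<^sub>R e) p < \<rho> \<and>
           (\<forall>e\<in>s. \<exists>w \<delta>. \<delta> > 0 \<and> (\<forall>x\<in>P. inner w x > Sup ((\<lambda>y. inner w y) ` P) - \<delta> \<longrightarrow> dist x e < \<rho>))"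
proof -
  obtain y where y: "y \<in> convex hull {e. good_pt P e}" "dist y p < \<rho>"
    using good_hull[OF assms(1,2)] assms(3) closure_approachable by blast
  then obtain s u where su: "finite s" "s \<subseteq> {e. good_pt P e}" "\<forall>x\<in>s. 0 \<le> u x" "sum u s = 1" "(\<Sum>v\<in>s. u v *\<^sub>R v) = y"
    unfolding convex_hull_explicit by blast
  have "\<forall>e\<in>s. \<exists>w \<delta>. \<delta> > 0 \<and> (\<forall>x\<in>P. inner w x > Sup ((\<lambda>y. inner w y) ` P) - \<delta> \<longrightarrow> dist x e < \<rho>)"
  proof
    fix e assume "e \<in> s"
    hence "good_pt P e" using su(2) by auto
    then show "\<exists>w \<delta>. \<delta> > 0 \<and> (\<forall>x\<in>P. inner w x > Sup ((\<lambda>y. inner w y) ` P) - \<delta> \<longrightarrow> dist x e < \<rho>)"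
      unfolding good_pt_def using assms(3) by blast
  qed
  then show ?thesis using su y by blast
qed



lemma bourgain2:
  fixes A :: "'a::real_normed_vector set" and \<phi>1 \<phi>2 :: "'a \<Rightarrow> real"
  assumes "bounded A" "bounded_linear \<phi>1" "bounded_linear \<phi>2" "x1 \<in> A" "\<phi>1 x1 > \<alpha>" "\<phi>2 x1 > \<beta>"
  shows "\<exists>T. finite T \<and> (\<forall>fe\<in>T. bounded_linear (fst fe) \<and> snd fe > 0) \<and>
     (\<forall>B. B \<subseteq> A \<longrightarrow> (\<forall>fe\<in>T. B \<inter> slice A (fst fe) (snd fe) \<noteq> {}) \<longrightarrow>
          (\<exists>x\<in>convex hull B. \<phi>1 x > \<alpha> \<and> \<phi>2 x > \<beta>))"
proof -
  define F where "F x = (\<phi>1 x, \<phi>2 x)" for x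
  have bF: "bounded_linear F" unfolding F_def using assms(2,3) by (rule bounded_linear_Pair)
  have linF: "linear F" using bF bounded_linear.linear by blast
  define P where "P = F ` A"
  have bP: "bounded P" unfolding P_def using bounded_linear_image[OF assms(1) bF] .
  define \<rho> where "\<rho> = min (\<phi>1 x1 - \<alpha>) (\<phi>2 x1 - \<beta>)"
  have \<rho>: "\<rho> > 0" using assms(5,6) \<rho>_def by simp
  obtain s u where su: "finite s" "\<forall>e\<in>s. 0 \<le> u e" "sum u s = 1" "dist (\<Sum>e\<in>s. u e *\<^sub>R e) (F x1) < \<rho>/2"
     and gd: "\<forall>e\<in>s. \<exists>w \<delta>. \<delta> > 0 \<and> (\<forall>x\<in>P. inner w x > Sup ((\<lambda>y. inner w y) ` P) - \<delta> \<longrightarrow> dist x e < \<rho>/2)"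
    using bourgain_fd[OF bP, of "F x1" "\<rho>/2"] \<rho> assms(4) P_def by auto
  obtain w \<delta> where wd: "\<forall>e\<in>s. \<delta> e > 0 \<and> (\<forall>x\<in>P. inner (w e) x > Sup ((\<lambda>y. inner (w e) y) ` P) - \<delta> e \<longrightarrow> dist x e < \<rho>/2)"
    using gd by metis
  define T where "T = (\<lambda>e. (\<lambda>x. inner (w e) (F x), \<delta> e)) ` s"
  have bl: "bounded_linear (\<lambda>x. inner (w e) (F x))" for e
    using bounded_linear_compose[OF bounded_linear_inner_right bF] by simp
  have "\<exists>x\<in>convex hull B. \<phi>1 x > \<alpha> \<and> \<phi>2 x > \<beta>"
    if B: "B \<subseteq> A" "\<forall>fe\<in>T. B \<inter> slice A (fst fe) (snd fe) \<noteq> {}" for B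
  proof -
    have "\<forall>e\<in>s. \<exists>b. b \<in> B \<and> b \<in> slice A (\<lambda>x. inner (w e) (F x)) (\<delta> e)"
      using B(2) unfolding T_def by auto
    then obtain b where b: "\<And>e. e \<in> s \<Longrightarrow> b e \<in> B \<and> b e \<in> slice A (\<lambda>x. inner (w e) (F x)) (\<delta> e)"
      by metis
    have bd: "dist (F (b e)) e < \<rho>/2" if "e \<in> s" for e
    proof -
      have "b e \<in> A" "inner (w e) (F (b e)) > Sup ((\<lambda>x. inner (w e) (F x)) ` A) - \<delta> e"
        using b[OF that] unfolding slice_def by auto
      moreover have "(\<lambda>x. inner (w e) (F x)) ` A = (\<lambda>y. inner (w e) y) ` P"
        unfolding P_def by (simp add: image_image)
      ultimately show ?thesis using wd that P_def by auto
    qed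
    define x where "x = (\<Sum>e\<in>s. u e *\<^sub>R b e)"
    have xB: "x \<in> convex hull B" unfolding x_def
      by (rule convex_sum[OF su(1) convex_convex_hull su(3)]) (use su(2) b in \<open>auto intro: hull_inc\<close>)
    have Fx: "F x = (\<Sum>e\<in>s. u e *\<^sub>R F (b e))"
      unfolding x_def by (simp add: linear_sum[OF linF] linear_scale[OF linF])
    have "dist (F x) (\<Sum>e\<in>s. u e *\<^sub>R e) = norm (\<Sum>e\<in>s. u e *\<^sub>R (F (b e) - e))"
      by (simp add: Fx dist_norm sum_subtractf scaleR_diff_right)
    also have "\<dots> \<le> (\<Sum>e\<in>s. norm (u e *\<^sub>R (F (b e) - e)))" by (rule norm_sum)
    also have "\<dots> \<le> (\<Sum>e\<in>s. u e * (\<rho>/2))"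
    proof (rule sum_mono)
      fix e assume "e \<in> s"
      then show "norm (u e *\<^sub>R (F (b e) - e)) \<le> u e * (\<rho>/2)"
      proof -
        have u0: "0 \<le> u e" using su(2) \<open>e \<in> s\<close> by auto
        have nb: "norm (F (b e) - e) \<le> \<rho>/2" using bd[OF \<open>e \<in> s\<close>] by (simp add: dist_norm)
        have "u e * norm (F (b e) - e) \<le> u e * (\<rho>/2)" using mult_left_mono[OF nb u0] .
        then show ?thesis using \<open>0 \<le> u e\<close> by simp
      qed
    qed
    also have "\<dots> = (\<Sum>e\<in>s. u e) * (\<rho>/2)" by (rule sum_distrib_right[symmetric])
    also have "\<dots> = \<rho>/2" using su(3) by simp
    finally have "dist (F x) (F x1) < \<rho>" using su(4) dist_triangle[of "F x" "F x1" "\<Sum>e\<in>s. u e *\<^sub>R e"] by linarith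
    hence "norm (\<phi>1 x - \<phi>1 x1) < \<rho>" "norm (\<phi>2 x - \<phi>2 x1) < \<rho>"
      unfolding dist_norm F_def using norm_fst_le[of "\<phi>1 x - \<phi>1 x1" "\<phi>2 x - \<phi>2 x1"] norm_snd_le[of "\<phi>2 x - \<phi>2 x1" "\<phi>1 x - \<phi>1 x1"]
      by auto
    hence "\<phi>1 x > \<alpha> \<and> \<phi>2 x > \<beta>" using \<rho>_def by auto
    then show ?thesis using xB by blast
  qed
  moreover have "finite T" using su(1) T_def by simp
  moreover have "\<forall>fe\<in>T. bounded_linear (fst fe) \<and> snd fe > 0" using bl wd T_def by auto
  ultimately show ?thesis by blast
qed



lemma qlift:
  fixes Q :: "'a::real_normed_vector \<Rightarrow> 'b::real_normed_vector"
  assumes "surj Q" "\<forall>y. norm y = Inf {norm x | x. Q x = y}" "norm y < \<gamma>"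
  shows "\<exists>x. Q x = y \<and> norm x < \<gamma>"
proof -
  obtain x0 where "Q x0 = y" using assms(1) by (metis surjD)
  hence ne: "{norm x | x. Q x = y} \<noteq> {}" by blast
  have bdd: "bdd_below {norm x |x. Q x = y}" by (rule bdd_belowI[of _ 0]) auto
  have "Inf {norm x | x. Q x = y} < \<gamma>" using assms(2,3) by simp
  then show ?thesis using cInf_less_iff[OF ne bdd] by blast
qed

lemma conv_nbhd:
  fixes C :: "'a::real_normed_vector set"
  assumes "convex C"
  shows "convex {z. \<exists>c\<in>C. norm (d + z - c) < R}"
proof (rule convexI)
  fix x y :: 'a and u v :: real
  assume "x \<in> {z. \<exists>c\<in>C. norm (d + z - c) < R}" "y \<in> {z. \<exists>c\<in>C. norm (d + z - c) < R}"
    and uv: "0 \<le> u" "0 \<le> v" "u + v = 1"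
  then obtain c1 c2 where c: "c1 \<in> C" "c2 \<in> C" "norm (d + x - c1) < R" "norm (d + y - c2) < R" by auto
  define M where "M = max (norm (d + x - c1)) (norm (d + y - c2))"
  have "u *\<^sub>R c1 + v *\<^sub>R c2 \<in> C" using assms c uv unfolding convex_def by blast
  moreover have "d + (u *\<^sub>R x + v *\<^sub>R y) - (u *\<^sub>R c1 + v *\<^sub>R c2) = u *\<^sub>R (d + x - c1) + v *\<^sub>R (d + y - c2)"
  proof -
    have "u *\<^sub>R (d + x - c1) + v *\<^sub>R (d + y - c2) = (u + v) *\<^sub>R d + (u *\<^sub>R x + v *\<^sub>R y) - (u *\<^sub>R c1 + v *\<^sub>R c2)"
      by (simp add: algebra_simps)
    then show ?thesis using uv(3) by simp
  qed
  moreover have "norm (u *\<^sub>R (d + x - c1) + v *\<^sub>R (d + y - c2)) \<le> u * M + v * M"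
  proof -
    have "norm (u *\<^sub>R (d + x - c1) + v *\<^sub>R (d + y - c2)) \<le> u * norm (d + x - c1) + v * norm (d + y - c2)"
      using norm_triangle_ineq[of "u *\<^sub>R (d + x - c1)" "v *\<^sub>R (d + y - c2)"] uv by simp
    also have "\<dots> \<le> u * M + v * M" unfolding M_def using uv
      by (intro add_mono mult_left_mono) auto
    finally show ?thesis .
  qed
  moreover have "u * M + v * M = M" using uv(3) by (simp add: distrib_right[symmetric])
  moreover have "M < R" using c M_def by simp
  ultimately have "norm (d + (u *\<^sub>R x + v *\<^sub>R y) - (u *\<^sub>R c1 + v *\<^sub>R c2)) < R" by simp
  then show "u *\<^sub>R x + v *\<^sub>R y \<in> {z. \<exists>c\<in>C. norm (d + z - c) < R}"
    using \<open>u *\<^sub>R c1 + v *\<^sub>R c2 \<in> C\<close> by blast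
qed

lemma slice_cong:
  assumes "\<And>x. x \<in> A \<Longrightarrow> f x = g x" shows "slice A f e = slice A g e"
proof -
  have "f ` A = g ` A" by (rule image_cong[OF refl assms])
  then show ?thesis unfolding slice_def using assms by auto
qed

lemma sep_dense:
  fixes Z :: "'a::real_normed_vector set" and Q :: "'a \<Rightarrow> 'b::real_normed_vector"
  assumes Zs: "subspace Z" and Ql: "bounded_linear Q" and Qs: "surj Q" and ker: "\<forall>x. Q x = 0 \<longleftrightarrow> x \<in> Z"
    and qn: "\<forall>y. norm y = Inf {norm x | x. Q x = y}"
    and sZ: "separable_space (top_of_set Z)" and sY: "separable_space (top_of_set (UNIV::'b set))"
  shows "\<exists>D::'a set. countable D \<and> (\<forall>x. \<forall>\<epsilon>>0. \<exists>d\<in>D. dist d x < \<epsilon>)"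
proof -
  obtain Cz where Cz: "countable Cz" "Cz \<subseteq> Z" "(top_of_set Z) closure_of Cz = Z"
    using sZ unfolding separable_space_def by auto
  have "Z \<inter> closure Cz = Z" using Cz(3) Cz(2) by (simp add: closure_of_subtopology Int_absorb1)
  hence Zc: "Z \<subseteq> closure Cz" by blast
  obtain Cy where Cy: "countable Cy" "closure Cy = (UNIV::'b set)"
    using sY unfolding separable_space_def by auto
  define L where "L y = (SOME x. Q x = y)" for y
  have L: "Q (L y) = y" for y
  proof -
    have ex: "\<exists>x. Q x = y" using surjD[OF Qs, of y] by auto
    show ?thesis unfolding L_def by (rule someI_ex[OF ex])
  qed
  have lin: "linear Q" using Ql bounded_linear.linear by blast
  define D where "D = (\<lambda>(y,z). L y + z) ` (Cy \<times> Cz)"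
  have "countable D" unfolding D_def using Cy(1) Cz(1) by simp
  have dn: "\<exists>d\<in>D. dist d x < \<epsilon>" if e: "\<epsilon> > 0" for x \<epsilon>
  proof -
    have "Q x \<in> closure Cy" using Cy(2) by simp
    moreover have "\<epsilon>/2 > 0" using e by simp
    ultimately obtain y where y: "y \<in> Cy" "dist y (Q x) < \<epsilon>/2"
      using closure_approachable[of "Q x" Cy] by blast
    have "norm (Q x - y) < \<epsilon>/2" using y(2) by (simp add: dist_norm norm_minus_commute)
    then obtain w where w: "Q w = Q x - y" "norm w < \<epsilon>/2" using qlift[OF Qs qn] by blast
    define z0 where "z0 = x - L y - w"
    have "Q z0 = 0" unfolding z0_def using w(1) L by (simp add: linear_diff[OF lin])
    hence "z0 \<in> Z" using ker by blast
    hence "z0 \<in> closure Cz" using Zc by blast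
    moreover have "\<epsilon>/2 > 0" using e by simp
    ultimately obtain z where z: "z \<in> Cz" "dist z z0 < \<epsilon>/2"
      using closure_approachable[of z0 Cz] by blast
    have LD: "L y + z \<in> D" unfolding D_def using y(1) z(1) by force
    have dle: "dist (L y + z) x \<le> dist z z0 + norm w"
    proof -
      have eq: "L y + z - x = (z - z0) - w" unfolding z0_def by (simp add: algebra_simps)
      show ?thesis unfolding dist_norm eq using norm_triangle_ineq4[of "z - z0" w] by (simp only:)
    qed
    have "dist (L y + z) x < \<epsilon>" using dle z(2) w(2) by linarith
    then show ?thesis using LD by blast
  qed
  show ?thesis
  proof (intro exI[of _ D] conjI allI impI)
    show "countable D" by fact
    fix x and \<epsilon>::real assume "\<epsilon> > 0" then show "\<exists>d\<in>D. dist d x < \<epsilon>" by (rule dn)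
  qed
qed



lemma main_scd:
  fixes Z :: "'a::real_normed_vector set" and Q :: "'a \<Rightarrow> 'b::real_normed_vector" and A :: "'a set" and Dx :: "'a set"
  assumes Zs: "subspace Z" and Ql: "bounded_linear Q" and Qs: "surj Q" and ker: "\<forall>x. Q x = 0 \<longleftrightarrow> x \<in> Z"
    and qn: "\<forall>y. norm y = Inf {norm x | x. Q x = y}"
    and scdZ: "\<forall>E. E \<subseteq> Z \<longrightarrow> convex E \<longrightarrow> bounded E \<longrightarrow> SCD_set_in Z E"
    and scdY: "\<forall>E. E \<subseteq> (UNIV::'b set) \<longrightarrow> convex E \<longrightarrow> bounded E \<longrightarrow> SCD_set_in (UNIV::'b set) E"
    and Dc: "countable Dx" and Dd: "\<forall>x. \<forall>\<epsilon>>0. \<exists>d\<in>Dx. dist d x < \<epsilon>"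
    and Acv: "convex A" and Abd: "bounded A" and Ane: "A \<noteq> {}"
  shows "SCD_set_in UNIV A"
proof -
  have linQ: "linear Q" using Ql bounded_linear.linear by blast
  obtain MA where MA: "\<And>x. x \<in> A \<Longrightarrow> norm x \<le> MA" using Abd unfolding bounded_iff by blast
  define E where "E d R = {z\<in>Z. \<exists>x\<in>A. norm (d + z - x) < R}" for d R
  have Esub: "E d R \<subseteq> Z" for d R unfolding E_def by blast
  have Ecv: "convex (E d R)" for d R
  proof -
    have "E d R = Z \<inter> {z. \<exists>c\<in>A. norm (d + z - c) < R}" unfolding E_def by blast
    then show ?thesis using convex_Int[OF subspace_imp_convex[OF Zs] conv_nbhd[OF Acv]] by simp
  qed
  have Ebd: "bounded (E d R)" for d R
    unfolding bounded_iff
  proof (intro exI[of _ "R + MA + norm d"] ballI)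
    fix z assume "z \<in> E d R"
    then obtain x where x: "x \<in> A" "norm (d + z - x) < R" unfolding E_def by blast
    have t1: "norm ((d + z - x) + x) \<le> norm (d + z - x) + norm x" by (rule norm_triangle_ineq)
    have t2: "norm ((d + z - x) + x - d) \<le> norm ((d + z - x) + x) + norm d" by (rule norm_triangle_ineq4)
    have eq: "(d + z - x) + x - d = z" by simp
    have t3: "norm z \<le> norm ((d + z - x) + x) + norm d" using t2 unfolding eq .
    have "norm z \<le> norm (d + z - x) + norm x + norm d" using t1 t3 by linarith
    then show "norm z \<le> R + MA + norm d" using x MA[OF x(1)] by linarith
  qed
  define PrZ where "PrZ d R h \<eta> \<longleftrightarrow> (\<forall>n. dual_functional_on Z (h n) \<and> \<eta> n > 0) \<and>
        (\<forall>B. B \<subseteq> E d R \<longrightarrow> (\<forall>n. B \<inter> slice (E d R) (h n) (\<eta> n) \<noteq> {}) \<longrightarrow> E d R \<subseteq> closure (convex hull B))"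
    for d R and h :: "nat \<Rightarrow> 'a \<Rightarrow> real" and \<eta> :: "nat \<Rightarrow> real"
  have "\<forall>d R. \<exists>h \<eta>. PrZ d R h \<eta>"
  proof (intro allI)
    fix d R
    have "SCD_set_in Z (E d R)" using scdZ[rule_format, OF Esub Ecv Ebd] .
    then show "\<exists>h \<eta>. PrZ d R h \<eta>" by (simp only: SCD_set_in_def PrZ_def)
  qed
  then obtain hf \<eta>f where hf: "\<And>d R. PrZ d R (hf d R) (\<eta>f d R)" using choice_2_2 by blast
  have "\<forall>d R m. \<exists>g. bounded_linear g \<and> (\<forall>z\<in>Z. g z = hf d R m z)"
  proof (intro allI)
    fix d R m
    have "dual_functional_on Z (hf d R m)" using hf[of d R] unfolding PrZ_def by blast
    then show "\<exists>g. bounded_linear g \<and> (\<forall>z\<in>Z. g z = hf d R m z)" by (rule hahn_banach_ext[OF Zs])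
  qed
  then obtain Hf where Hf0: "\<And>d R m. bounded_linear (Hf d R m) \<and> (\<forall>z\<in>Z. Hf d R m z = hf d R m z)"
    using choice_3_1[where P="\<lambda>(d::'a) (R::real) (m::nat) (g::'a\<Rightarrow>real). bounded_linear g \<and> (\<forall>z\<in>Z. g z = hf d R m z)"] by blast
  have Hf: "\<And>d R m. bounded_linear (Hf d R m)" "\<And>d R m z. z \<in> Z \<Longrightarrow> Hf d R m z = hf d R m z"
    using Hf0 by auto
  define AH where "AH d R m \<theta> = {x\<in>A. Hf d R m x > \<theta> + Hf d R m d}" for d R m \<theta>
  have AHsub: "AH d R m \<theta> \<subseteq> A" for d R m \<theta> unfolding AH_def by blast
  have AHcv: "convex (AH d R m \<theta>)" for d R m \<theta>
  proof -
    have "AH d R m \<theta> = A \<inter> (Hf d R m -` {\<theta> + Hf d R m d <..})" unfolding AH_def by auto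
    moreover have "convex (Hf d R m -` {\<theta> + Hf d R m d <..})"
      by (rule convex_linear_vimage) (use Hf(1) bounded_linear.linear in auto)
    ultimately show ?thesis using convex_Int[OF Acv] by simp
  qed
  have QAcv: "convex (Q ` AH d R m \<theta>)" for d R m \<theta> using convex_linear_image[OF linQ AHcv] .
  have QAbd: "bounded (Q ` AH d R m \<theta>)" for d R m \<theta>
    using bounded_linear_image[OF bounded_subset[OF Abd AHsub] Ql] .
  define PrY where "PrY d R m \<theta> g \<delta> \<longleftrightarrow> (\<forall>n. dual_functional_on UNIV (g n) \<and> \<delta> n > 0) \<and>
        (\<forall>B. B \<subseteq> Q ` AH d R m \<theta> \<longrightarrow> (\<forall>n. B \<inter> slice (Q ` AH d R m \<theta>) (g n) (\<delta> n) \<noteq> {}) \<longrightarrow>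
            Q ` AH d R m \<theta> \<subseteq> closure (convex hull B))"
    for d R m \<theta> and g :: "nat \<Rightarrow> 'b \<Rightarrow> real" and \<delta> :: "nat \<Rightarrow> real"
  have "\<forall>d R m \<theta>. \<exists>g \<delta>. PrY d R m \<theta> g \<delta>"
  proof (intro allI)
    fix d R m \<theta>
    have "SCD_set_in UNIV (Q ` AH d R m \<theta>)" using scdY[rule_format, OF subset_UNIV QAcv QAbd] .
    then show "\<exists>g \<delta>. PrY d R m \<theta> g \<delta>" by (simp only: SCD_set_in_def PrY_def)
  qed
  then obtain gf \<delta>f where gf: "\<And>d R m \<theta>. PrY d R m \<theta> (gf d R m \<theta>) (\<delta>f d R m \<theta>)"
    using choice_4_2 by blast
  define cond where "cond d R m \<theta> k x \<longleftrightarrow> Hf d R m x > \<theta> + Hf d R m d \<and>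
       gf d R m \<theta> k (Q x) > Sup (gf d R m \<theta> k ` Q ` AH d R m \<theta>) - \<delta>f d R m \<theta> k" for d R m \<theta> k x
  have gbl: "bounded_linear (gf d R m \<theta> k)" for d R m \<theta> k
    using gf[of d R m \<theta>] unfolding PrY_def by (simp add: dual_UNIV_iff)
  have Vne: "\<exists>x1\<in>A. cond d R m \<theta> k x1" if ne: "AH d R m \<theta> \<noteq> {}" for d R m \<theta> k
  proof -
    let ?g = "gf d R m \<theta> k" and ?QA = "Q ` AH d R m \<theta>"
    have ne2: "?g ` ?QA \<noteq> {}" using ne by simp
    have bdd: "bdd_above (?g ` ?QA)"
      by (rule bounded_imp_bdd_above[OF bounded_linear_image[OF QAbd gbl]])
    have "Sup (?g ` ?QA) - \<delta>f d R m \<theta> k < Sup (?g ` ?QA)"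
      using gf[of d R m \<theta>] unfolding PrY_def by simp
    then obtain y where "y \<in> ?g ` ?QA" "Sup (?g ` ?QA) - \<delta>f d R m \<theta> k < y"
      using less_cSup_iff[OF ne2 bdd] by blast
    then obtain x1 where "x1 \<in> AH d R m \<theta>" "Sup (?g ` ?QA) - \<delta>f d R m \<theta> k < ?g (Q x1)" by blast
    then show ?thesis unfolding cond_def AH_def by auto
  qed
  define PrT where "PrT d R m \<theta> k T \<longleftrightarrow> finite T \<and> (\<forall>fe\<in>T. bounded_linear (fst fe) \<and> snd fe > 0) \<and>
     (\<forall>B. B \<subseteq> A \<longrightarrow> (\<forall>fe\<in>T. B \<inter> slice A (fst fe) (snd fe) \<noteq> {}) \<longrightarrow>
          (\<exists>x\<in>convex hull B. cond d R m \<theta> k x))"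
    for d R m \<theta> k and T :: "(('a \<Rightarrow> real) \<times> real) set"
  have "\<forall>d R m \<theta> k. \<exists>T. AH d R m \<theta> \<noteq> {} \<longrightarrow> PrT d R m \<theta> k T"
  proof (intro allI)
    fix d R m \<theta> k
    show "\<exists>T. AH d R m \<theta> \<noteq> {} \<longrightarrow> PrT d R m \<theta> k T"
    proof (cases "AH d R m \<theta> = {}")
      case True then show ?thesis by blast
    next
      case False
      then obtain x1 where x1: "x1 \<in> A" "cond d R m \<theta> k x1" using Vne by blast
      have bl2: "bounded_linear (\<lambda>x. gf d R m \<theta> k (Q x))"
        using bounded_linear_compose[OF gbl Ql] by simp
      let ?al = "\<theta> + Hf d R m d" and ?be = "Sup (gf d R m \<theta> k ` Q ` AH d R m \<theta>) - \<delta>f d R m \<theta> k"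
      have c1: "Hf d R m x1 > ?al" and c2: "gf d R m \<theta> k (Q x1) > ?be" using x1(2) unfolding cond_def by auto
      obtain T where T: "finite T" "\<forall>fe\<in>T. bounded_linear (fst fe) \<and> snd fe > 0"
        "\<forall>B. B \<subseteq> A \<longrightarrow> (\<forall>fe\<in>T. B \<inter> slice A (fst fe) (snd fe) \<noteq> {}) \<longrightarrow>
          (\<exists>x\<in>convex hull B. Hf d R m x > ?al \<and> gf d R m \<theta> k (Q x) > ?be)"
        using bourgain2[OF Abd Hf(1) bl2 x1(1) c1 c2] by blast
      have "PrT d R m \<theta> k T" unfolding PrT_def cond_def using T by (intro conjI)
      then show ?thesis by blast
    qed
  qed
  then obtain Tf where Tf0: "\<And>d R m \<theta> k. AH d R m \<theta> \<noteq> {} \<longrightarrow> PrT d R m \<theta> k (Tf d R m \<theta> k)"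
    using choice_5_1[where P="\<lambda>(d::'a) (R::real) (m::nat) (\<theta>::real) (k::nat) T. AH d R m \<theta> \<noteq> {} \<longrightarrow> PrT d R m \<theta> k T"] by blast
  have Tf: "\<And>d R m \<theta> k. AH d R m \<theta> \<noteq> {} \<Longrightarrow> PrT d R m \<theta> k (Tf d R m \<theta> k)" using Tf0 by blast
  define I where "I = {(d, R, m, \<theta>, k) | d R m \<theta> (k::nat). d \<in> Dx \<and> R \<in> \<rat> \<and> \<theta> \<in> \<rat> \<and> AH d R m \<theta> \<noteq> {}}"
  define Tc where "Tc = (\<lambda>(d::'a, R::real, m::nat, \<theta>::real, k::nat). Tf d R m \<theta> k)"
  define SL where "SL = insert ((\<lambda>x::'a. 0::real), 1::real) (\<Union>i\<in>I. Tc i)"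
  have cI: "countable I"
  proof (rule countable_subset)
    show "I \<subseteq> Dx \<times> \<rat> \<times> (UNIV::nat set) \<times> \<rat> \<times> (UNIV::nat set)" unfolding I_def by auto
    show "countable (Dx \<times> \<rat> \<times> (UNIV::nat set) \<times> \<rat> \<times> (UNIV::nat set))"
      using Dc by (intro countable_SIGMA) (auto intro: countable_rat)
  qed
  have TcI: "PrT d R m \<theta> k (Tc (d, R, m, \<theta>, k))" if "(d, R, m, \<theta>, k) \<in> I" for d R m \<theta> k
    using Tf that unfolding Tc_def I_def by auto
  have cALL: "countable SL"
  proof -
    have "countable (Tc i)" if "i \<in> I" for i
    proof -
      from that obtain d R m \<theta> k where i: "i = (d,R,m,\<theta>,k)" "(d,R,m,\<theta>,k) \<in> I" unfolding I_def by blast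
      have "finite (Tc (d,R,m,\<theta>,k))" using TcI[OF i(2)] unfolding PrT_def by blast
      then show ?thesis using i(1) by (simp add: countable_finite)
    qed
    then show ?thesis unfolding SL_def using cI by auto
  qed
  have ALLne: "SL \<noteq> {}" unfolding SL_def by blast
  have ALLgood: "bounded_linear (fst fe) \<and> snd fe > 0" if feS: "fe \<in> SL" for fe
  proof (cases "fe = ((\<lambda>x::'a. 0::real), 1::real)")
    case True then show ?thesis by (simp add: bounded_linear_zero)
  next
    case False
    then obtain i where iI: "i \<in> I" "fe \<in> Tc i" using feS unfolding SL_def by blast
    from iI obtain d R m \<theta> k where i: "i = (d,R,m,\<theta>,k)" "(d,R,m,\<theta>,k) \<in> I" unfolding I_def by blast
    show ?thesis using TcI[OF i(2)] iI(2) i(1) unfolding PrT_def by blast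
  qed
  define f where "f n = fst (from_nat_into SL n)" for n
  define \<epsilon> where "\<epsilon> n = snd (from_nat_into SL n)" for n
  have dens: "A \<subseteq> closure C" if CA: "C \<subseteq> A" and Ccv: "convex C"
     and hit: "\<And>d R m \<theta> k. (d, R, m, \<theta>, k) \<in> I \<Longrightarrow> \<exists>x\<in>C. cond d R m \<theta> k x" for C
  proof
    fix a assume aA: "a \<in> A"
    show "a \<in> closure C" unfolding closure_approachable
    proof (intro allI impI)
      fix \<epsilon> :: real assume ep: "\<epsilon> > 0"
      have "(0::real) < \<epsilon>/3" using ep by simp
      then obtain R where R: "R \<in> \<rat>" "0 < R" "R < \<epsilon>/3" using Rats_dense_in_real[of 0 "\<epsilon>/3"] by blast
      obtain d where d: "d \<in> Dx" "dist d a < R" using Dd R(2) by blast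
      define BE where "BE = {z \<in> E d R. \<exists>c\<in>C. norm (d + z - c) < R}"
      have BEsub: "BE \<subseteq> E d R" unfolding BE_def by blast
      have zeroE: "0 \<in> E d R"
      proof -
        have "norm (d + 0 - a) < R" using d(2) by (simp add: dist_norm)
        then show ?thesis unfolding E_def using aA subspace_0[OF Zs] by blast
      qed
      have hitE: "BE \<inter> slice (E d R) (hf d R m) (\<eta>f d R m) \<noteq> {}" for m
      proof -
        let ?H = "Hf d R m" and ?Ed = "E d R" and ?\<eta> = "\<eta>f d R m"
        have linH: "linear ?H" using Hf(1) bounded_linear.linear by blast
        have sl: "slice ?Ed (hf d R m) ?\<eta> = slice ?Ed ?H ?\<eta>"
        proof (rule slice_cong)
          fix x assume "x \<in> ?Ed"
          hence "x \<in> Z" using Esub by blast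
          then show "hf d R m x = ?H x" using Hf(2)[of x d R m] by simp
        qed
        have \<eta>0: "?\<eta> > 0" using hf[of d R] unfolding PrZ_def by blast
        obtain K where K: "K > 0" "\<And>x. norm (?H x) \<le> norm x * K"
          using bounded_linear.pos_bounded[OF Hf(1)] by blast
        have ne: "?H ` ?Ed \<noteq> {}" using zeroE by blast
        have bdd: "bdd_above (?H ` ?Ed)"
          by (rule bounded_imp_bdd_above[OF bounded_linear_image[OF Ebd Hf(1)]])
        have "Sup (?H ` ?Ed) - ?\<eta> < Sup (?H ` ?Ed)" using \<eta>0 by simp
        then obtain hz where "hz \<in> ?H ` ?Ed" "Sup (?H ` ?Ed) - ?\<eta> < hz"
          using less_cSup_iff[OF ne bdd] by blast
        then obtain z0 where z0: "z0 \<in> ?Ed" "Sup (?H ` ?Ed) - ?\<eta> < ?H z0" by blast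
        obtain x0 where x0: "x0 \<in> A" "norm (d + z0 - x0) < R" and z0Z: "z0 \<in> Z"
          using z0(1) unfolding E_def by blast
        define \<sigma> where "\<sigma> = ?H z0 - (Sup (?H ` ?Ed) - ?\<eta>)"
        define \<tau> where "\<tau> = R - norm (d + z0 - x0)"
        have \<sigma>: "\<sigma> > 0" using z0(2) \<sigma>_def by simp
        have \<tau>: "\<tau> > 0" using x0(2) \<tau>_def by simp
        have "?H x0 - ?H d - \<sigma>/2 < ?H x0 - ?H d" using \<sigma> by simp
        then obtain \<theta> where \<theta>: "\<theta> \<in> \<rat>" "?H x0 - ?H d - \<sigma>/2 < \<theta>" "\<theta> < ?H x0 - ?H d"
          using Rats_dense_in_real by blast
        have x0AH: "x0 \<in> AH d R m \<theta>" unfolding AH_def using x0(1) \<theta>(3) by auto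
        let ?AHs = "AH d R m \<theta>" and ?g = "gf d R m \<theta>" and ?\<delta> = "\<delta>f d R m \<theta>"
        let ?QA = "Q ` ?AHs" and ?QC = "Q ` (C \<inter> ?AHs)"
        have iI: "(d,R,m,\<theta>,k) \<in> I" for k unfolding I_def using d(1) R(1) \<theta>(1) x0AH by blast
        have QAcl: "?QA \<subseteq> closure (convex hull ?QC)"
        proof -
          have prp: "\<forall>B. B \<subseteq> ?QA \<longrightarrow> (\<forall>n. B \<inter> slice ?QA (?g n) (?\<delta> n) \<noteq> {}) \<longrightarrow> ?QA \<subseteq> closure (convex hull B)"
            using gf[of d R m \<theta>] unfolding PrY_def by blast
          have sub: "?QC \<subseteq> ?QA" by blast
          have "?QC \<inter> slice ?QA (?g k) (?\<delta> k) \<noteq> {}" for k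
          proof -
            obtain x where x: "x \<in> C" "cond d R m \<theta> k x" using hit[OF iI[of k]] by blast
            have xA: "x \<in> ?AHs" using x CA unfolding cond_def AH_def by auto
            hence "Q x \<in> ?QC" "Q x \<in> slice ?QA (?g k) (?\<delta> k)" using x unfolding slice_def cond_def by auto
            thus ?thesis by blast
          qed
          thus ?thesis using prp sub by blast
        qed
        have "convex ?QC" by (rule convex_linear_image[OF linQ convex_Int[OF Ccv AHcv]])
        hence "convex hull ?QC = ?QC" by (rule convex_hull_eq[THEN iffD2])
        hence Qx0: "Q x0 \<in> closure ?QC" using QAcl x0AH by auto
        define \<gamma> where "\<gamma> = min \<tau> (\<sigma> / (2 * K))"
        have \<gamma>: "\<gamma> > 0" unfolding \<gamma>_def using \<tau> \<sigma> K(1) by simp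
        obtain qc where "qc \<in> ?QC" "dist qc (Q x0) < \<gamma>" using Qx0 \<gamma> closure_approachable by blast
        then obtain c where c: "c \<in> C" "c \<in> ?AHs" "dist (Q c) (Q x0) < \<gamma>" by blast
        have "norm (Q c - Q x0) < \<gamma>" using c(3) by (simp add: dist_norm)
        then obtain w1 where w1: "Q w1 = Q c - Q x0" "norm w1 < \<gamma>" using qlift[OF Qs qn] by blast
        define z1 where "z1 = c - x0 - w1"
        have "Q z1 = 0" unfolding z1_def using w1(1) by (simp add: linear_diff[OF linQ])
        hence z1Z: "z1 \<in> Z" using ker by blast
        define z' where "z' = z0 + z1"
        have z'Z: "z' \<in> Z" unfolding z'_def using subspace_add[OF Zs z0Z z1Z] .
        have eq: "d + z' - c = (d + z0 - x0) - w1" unfolding z'_def z1_def by (simp add: algebra_simps)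
        have "norm (d + z' - c) \<le> norm (d + z0 - x0) + norm w1" unfolding eq by (rule norm_triangle_ineq4)
        moreover have "\<gamma> \<le> \<tau>" unfolding \<gamma>_def by simp
        ultimately have nz: "norm (d + z' - c) < R" using w1(2) \<tau>_def by linarith
        have cA: "c \<in> A" using c(1) CA by blast
        have z'E: "z' \<in> ?Ed" unfolding E_def using z'Z cA nz by blast
        have z'BE: "z' \<in> BE" unfolding BE_def using z'E c(1) nz by blast
        have Hz': "?H z' = ?H z0 + ?H c - ?H x0 - ?H w1"
          unfolding z'_def z1_def by (simp add: linear_add[OF linH] linear_diff[OF linH])
        have "?H w1 \<le> norm w1 * K" using K(2)[of w1] by simp
        also have "\<dots> \<le> \<gamma> * K" using w1(2) K(1) by simp
        also have "\<gamma> * K \<le> (\<sigma> / (2 * K)) * K"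
        proof -
          have "\<gamma> \<le> \<sigma> / (2 * K)" unfolding \<gamma>_def by (rule min.cobounded2)
          then show ?thesis using K(1) by (intro mult_right_mono) auto
        qed
        also have "(\<sigma> / (2 * K)) * K = \<sigma>/2" using K(1) by simp
        finally have Hw1: "?H w1 \<le> \<sigma>/2" .
        have Hc: "?H c > \<theta> + ?H d" using c(2) unfolding AH_def by blast
        have "?H z' > Sup (?H ` ?Ed) - ?\<eta>" using Hz' Hw1 Hc \<theta>(2) \<sigma>_def by linarith
        hence "z' \<in> slice ?Ed ?H ?\<eta>" unfolding slice_def using z'E by blast
        then show ?thesis using z'BE sl by blast
      qed
      have "E d R \<subseteq> closure (convex hull BE)" using hf[of d R] BEsub hitE unfolding PrZ_def by blast
      hence "0 \<in> closure (convex hull BE)" using zeroE by blast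
      moreover have "\<epsilon>/3 > 0" using ep by simp
      ultimately obtain y where y: "y \<in> convex hull BE" "dist y 0 < \<epsilon>/3"
        using closure_approachable by blast
      have "convex hull BE \<subseteq> {z. \<exists>c\<in>C. norm (d + z - c) < R}"
        by (rule hull_minimal) (use conv_nbhd[OF Ccv] BE_def in auto)
      then obtain c where c: "c \<in> C" "norm (d + y - c) < R" using y(1) by blast
      have eq: "c - a = (d - a) + y - (d + y - c)" by (simp add: algebra_simps)
      have "norm (c - a) \<le> norm ((d - a) + y) + norm (d + y - c)" unfolding eq by (rule norm_triangle_ineq4)
      also have "norm ((d - a) + y) \<le> norm (d - a) + norm y" by (rule norm_triangle_ineq)
      finally have "dist c a \<le> dist d a + norm y + norm (d + y - c)" by (simp add: dist_norm)
      moreover have "norm y < \<epsilon>/3" using y(2) by simp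
      ultimately have "dist c a < \<epsilon>" using c(2) d(2) R(3) by linarith
      then show "\<exists>c\<in>C. dist c a < \<epsilon>" using c(1) by blast
    qed
  qed
  show ?thesis unfolding SCD_set_in_def
  proof (intro exI[of _ f] exI[of _ \<epsilon>] conjI allI impI)
    fix n
    have "from_nat_into SL n \<in> SL" using from_nat_into[OF ALLne] .
    then show "dual_functional_on UNIV (f n)"
      using ALLgood unfolding f_def by (simp add: dual_UNIV_iff)
  next
    fix n
    have "from_nat_into SL n \<in> SL" using from_nat_into[OF ALLne] .
    then show "\<epsilon> n > 0" using ALLgood unfolding \<epsilon>_def by simp
  next
    fix B assume BA: "B \<subseteq> A" and Bh: "\<forall>n. B \<inter> slice A (f n) (\<epsilon> n) \<noteq> {}"
    have Bh2: "B \<inter> slice A (fst fe) (snd fe) \<noteq> {}" if "fe \<in> SL" for fe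
    proof -
      have "fe \<in> range (from_nat_into SL)" using range_from_nat_into[OF ALLne cALL] that by simp
      then obtain n where "fe = from_nat_into SL n" by blast
      then show ?thesis using Bh unfolding f_def \<epsilon>_def by simp
    qed
    have CA: "convex hull B \<subseteq> A" using BA Acv by (simp add: hull_minimal)
    show "A \<subseteq> closure (convex hull B)"
    proof (rule dens[OF CA convex_convex_hull])
      fix d R m \<theta> k assume iI: "(d, R, m, \<theta>, k) \<in> I"
      have "\<forall>fe\<in>Tc (d, R, m, \<theta>, k). B \<inter> slice A (fst fe) (snd fe) \<noteq> {}"
        using Bh2 iI unfolding SL_def by blast
      then show "\<exists>x\<in>convex hull B. cond d R m \<theta> k x"
        using TcI[OF iI] BA unfolding PrT_def by blast
    qed
  qed
qed



theorem theorem3p6: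
  fixes Z :: "'a::banach set" and Q :: "'a \<Rightarrow> 'b::banach"
  assumes "subspace Z" and "closed Z"
    and "bounded_linear Q" and "surj Q"
    and "\<forall>x. Q x = 0 \<longleftrightarrow> x \<in> Z"
    and "\<forall>y. norm y = Inf {norm x | x. Q x = y}"
    and "SCD_space_on Z"
    and "SCD_space TYPE('b)"
  shows "SCD_space TYPE('a)"
proof -
  have sZ: "separable_space (top_of_set Z)" and scdZ: "\<forall>E. E \<subseteq> Z \<longrightarrow> convex E \<longrightarrow> bounded E \<longrightarrow> SCD_set_in Z E"
    using assms(7) unfolding SCD_space_on_def by auto
  have sY: "separable_space (top_of_set (UNIV::'b set))"
    and scdY: "\<forall>E. E \<subseteq> (UNIV::'b set) \<longrightarrow> convex E \<longrightarrow> bounded E \<longrightarrow> SCD_set_in (UNIV::'b set) E"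
    using assms(8) unfolding SCD_space_on_def by auto
  obtain Dx :: "'a set" where Dc: "countable Dx" and Dd: "\<forall>x. \<forall>\<epsilon>>0. \<exists>d\<in>Dx. dist d x < \<epsilon>"
    using sep_dense[OF assms(1,3,4,5,6) sZ sY] by blast
  have sep: "separable_space (top_of_set (UNIV::'a set))"
    unfolding separable_space_def
  proof (intro exI[of _ Dx] conjI)
    show "countable Dx" by (rule Dc)
    show "Dx \<subseteq> topspace (top_of_set UNIV)" by simp
    have "closure Dx = UNIV"
    proof (intro set_eqI iffI)
      fix x :: 'a
      show "x \<in> closure Dx" unfolding closure_approachable using Dd by blast
    qed simp
    then show "top_of_set UNIV closure_of Dx = topspace (top_of_set UNIV)" by simp
  qed
  have scd: "SCD_set_in UNIV A" if "convex A" "bounded A" for A :: "'a set"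
  proof (cases "A = {}")
    case True
    show ?thesis unfolding SCD_set_in_def True
      by (intro exI[of _ "\<lambda>n x. 0"] exI[of _ "\<lambda>n. 1"]) (simp add: dual_UNIV_iff bounded_linear_zero)
  next
    case False
    show ?thesis by (rule main_scd[OF assms(1,3,4,5,6) scdZ scdY Dc Dd that False])
  qed
  show ?thesis unfolding SCD_space_on_def using sep scd by blast
qed

end
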